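(* Let $L\subseteq\Sigma^*$ with $L\ne\Sigma^*$, and suppose $L$ is prefix-closed, suffix-closed, factor-closed, or subword-closed. Then: - $(L^-)^+=L^-$; - $L^+$ is closed under the same relation as $L$; - $((L^+)^-)^+=(L^+)^-$. Consequently, every language obtainable from $L$ by finitely many applications of positive closure and complement is one of $L$, $L^-$, $L^+$, $(L^+)^-$.
   Context: $L^-=\Sigma^*\setminus L$ denotes complement, and $L^+=\bigcup_{i\ge1}L^i$ denotes positive closure. A language is prefix-closed (suffix-, factor-, subword-closed) if it contains every prefix (suffix, factor, subword) of each of its words, where subword means scattered subsequence. *)

theory Defs
  imports Main "HOL-Library.Sublist"
begin

text \<open>Languages over the alphabet given by the type 'a; Sigma* is UNIV :: 'a list set.
Complement of L is the HOL set complement - L.\<close>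

definition conc :: "'a list set \<Rightarrow> 'a list set \<Rightarrow> 'a list set" where
  "conc A B = {u @ v | u v. u \<in> A \<and> v \<in> B}"

fun lang_pow :: "'a list set \<Rightarrow> nat \<Rightarrow> 'a list set" where
  "lang_pow L 0 = {[]}"
| "lang_pow L (Suc n) = conc L (lang_pow L n)"

definition plus_cl :: "'a list set \<Rightarrow> 'a list set" where
  "plus_cl L = (\<Union>i\<in>{1..}. lang_pow L i)"

definition prefix_closed :: "'a list set \<Rightarrow> bool" where
  "prefix_closed L \<longleftrightarrow> (\<forall>w\<in>L. \<forall>u. prefix u w \<longrightarrow> u \<in> L)"

definition suffix_closed :: "'a list set \<Rightarrow> bool" where
  "suffix_closed L \<longleftrightarrow> (\<forall>w\<in>L. \<forall>u. suffix u w \<longrightarrow> u \<in> L)"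

definition factor_closed :: "'a list set \<Rightarrow> bool" where
  "factor_closed L \<longleftrightarrow> (\<forall>w\<in>L. \<forall>u. sublist u w \<longrightarrow> u \<in> L)"

definition subword_closed :: "'a list set \<Rightarrow> bool" where
  "subword_closed L \<longleftrightarrow> (\<forall>w\<in>L. \<forall>u. subseq u w \<longrightarrow> u \<in> L)"

inductive_set kc_reach :: "'a list set \<Rightarrow> 'a list set set" for L where
  base: "L \<in> kc_reach L"
| plus: "X \<in> kc_reach L \<Longrightarrow> plus_cl X \<in> kc_reach L"
| compl: "X \<in> kc_reach L \<Longrightarrow> - X \<in> kc_reach L"

end

theory Submission
  imports Defs
begin

lemma lang_pow_char: "lang_pow X n = {concat ws | ws. length ws = n \<and> set ws \<subseteq> X}"
proof (induction n)
  case 0 then show ?case by auto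
next
  case (Suc n)
  show ?case
  proof
    show "lang_pow X (Suc n) \<subseteq> {concat ws | ws. length ws = Suc n \<and> set ws \<subseteq> X}"
    proof
      fix w assume "w \<in> lang_pow X (Suc n)"
      then obtain u v where "w = u @ v" "u \<in> X" "v \<in> lang_pow X n" by (auto simp: conc_def)
      then obtain ws where "v = concat ws" "length ws = n" "set ws \<subseteq> X" using Suc by auto
      then have "w = concat (u # ws) \<and> length (u # ws) = Suc n \<and> set (u # ws) \<subseteq> X"
        using \<open>w = u @ v\<close> \<open>u \<in> X\<close> by simp
      then show "w \<in> {concat ws | ws. length ws = Suc n \<and> set ws \<subseteq> X}" by blast
    qed
  next
    show "{concat ws | ws. length ws = Suc n \<and> set ws \<subseteq> X} \<subseteq> lang_pow X (Suc n)"
    proof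
      fix w assume "w \<in> {concat ws | ws. length ws = Suc n \<and> set ws \<subseteq> X}"
      then obtain ws where "w = concat ws" "length ws = Suc n" "set ws \<subseteq> X" by auto
      then show "w \<in> lang_pow X (Suc n)" using Suc
        by (cases ws) (auto simp: conc_def)
    qed
  qed
qed

lemma plus_char: "plus_cl X = {concat ws | ws. ws \<noteq> [] \<and> set ws \<subseteq> X}"
  unfolding plus_cl_def lang_pow_char
proof (auto, goal_cases)
  case (1 ws)
  then show ?case by (intro bexI[of _ "length ws"]) (auto simp: Suc_le_eq)
qed

lemma plus_in: "w \<in> plus_cl X \<longleftrightarrow> (\<exists>ws. ws \<noteq> [] \<and> set ws \<subseteq> X \<and> w = concat ws)"
  by (auto simp: plus_char)

lemma sub_plus: "X \<subseteq> plus_cl X"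
  by (auto simp: plus_in intro!: exI[of _ "[_]"])

lemma plus_app: "u \<in> plus_cl X \<Longrightarrow> v \<in> plus_cl X \<Longrightarrow> u @ v \<in> plus_cl X"
proof -
  assume "u \<in> plus_cl X" "v \<in> plus_cl X"
  then obtain ws vs where "ws \<noteq> []" "set ws \<subseteq> X" "u = concat ws"
     "vs \<noteq> []" "set vs \<subseteq> X" "v = concat vs" by (auto simp: plus_in)
  then show ?thesis unfolding plus_in by (intro exI[of _ "ws @ vs"]) auto
qed

lemma concat_closed_plus:
  assumes "\<And>u v. u \<in> X \<Longrightarrow> v \<in> X \<Longrightarrow> u @ v \<in> X"
  shows "plus_cl X = X"
proof
  show "plus_cl X \<subseteq> X"
  proof
    fix w assume "w \<in> plus_cl X"
    then obtain ws where ws: "ws \<noteq> []" "set ws \<subseteq> X" "w = concat ws" by (auto simp: plus_in)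
    have "ws \<noteq> [] \<Longrightarrow> set ws \<subseteq> X \<Longrightarrow> concat ws \<in> X"
    proof (induction ws)
      case Nil then show ?case by simp
    next
      case (Cons a ws) then show ?case using assms by (cases ws) auto
    qed
    then show "w \<in> X" using ws by simp
  qed
qed (rule sub_plus)

lemma plus_idem: "plus_cl (plus_cl X) = plus_cl X"
  by (rule concat_closed_plus) (rule plus_app)

lemma compl_plus:
  assumes "prefix_closed X \<or> suffix_closed X"
  shows "plus_cl (- X) = - X"
proof (rule concat_closed_plus)
  fix u v assume "u \<in> - X" "v \<in> - X"
  then show "u @ v \<in> - X" using assms
    unfolding prefix_closed_def suffix_closed_def
    by (metis ComplD ComplI prefixI suffixI)
qed

lemma pc_plus:
  assumes "prefix_closed L"
  shows "prefix_closed (plus_cl L)"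
proof -
  have "\<And>u. ws \<noteq> [] \<Longrightarrow> set ws \<subseteq> L \<Longrightarrow> prefix u (concat ws) \<Longrightarrow> u \<in> plus_cl L" for ws
  proof (induction ws)
    case Nil then show ?case by simp
  next
    case (Cons a ws u)
    have aL: "a \<in> L" using Cons.prems(2) by simp
    from Cons.prems(3) have "prefix u a \<or> (\<exists>r. u = a @ r \<and> prefix r (concat ws))"
      by (simp add: prefix_append)
    then show ?case
    proof
      assume "prefix u a"
      then have "u \<in> L" using aL assms unfolding prefix_closed_def by blast
      then show ?thesis using sub_plus by blast
    next
      assume "\<exists>r. u = a @ r \<and> prefix r (concat ws)"
      then obtain r where r: "u = a @ r" "prefix r (concat ws)" by blast
      show ?thesis
      proof (cases "ws = []")
        case True then have "u = a" using r by simp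
        then show ?thesis using aL sub_plus by blast
      next
        case False
        then have "r \<in> plus_cl L" using Cons.IH[of r] Cons.prems(2) r(2) by simp
        then have "a @ r \<in> plus_cl L" using aL sub_plus plus_app by blast
        then show ?thesis using r by simp
      qed
    qed
  qed
  then show ?thesis unfolding prefix_closed_def
  proof (intro ballI allI impI)
    fix w u assume H: "\<And>ws u. ws \<noteq> [] \<Longrightarrow> set ws \<subseteq> L \<Longrightarrow> prefix u (concat ws) \<Longrightarrow> u \<in> plus_cl L"
      and w: "w \<in> plus_cl L" and u: "prefix u w"
    from w obtain ws where "ws \<noteq> []" "set ws \<subseteq> L" "w = concat ws" unfolding plus_in by blast
    then show "u \<in> plus_cl L" using H u by blast
  qed
qed

lemma sc_plus:
  assumes "suffix_closed L"
  shows "suffix_closed (plus_cl L)"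
proof -
  have "\<And>u. ws \<noteq> [] \<Longrightarrow> set ws \<subseteq> L \<Longrightarrow> suffix u (concat ws) \<Longrightarrow> u \<in> plus_cl L" for ws
  proof (induction ws)
    case Nil then show ?case by simp
  next
    case (Cons a ws u)
    have aL: "a \<in> L" using Cons.prems(2) by simp
    show ?case
    proof (cases "ws = []")
      case True
      then have "suffix u a" using Cons.prems by simp
      then have "u \<in> L" using aL assms unfolding suffix_closed_def by blast
      then show ?thesis using sub_plus by blast
    next
      case False
      from Cons.prems(3) have "suffix u (concat ws) \<or> (\<exists>x. u = x @ concat ws \<and> suffix x a)"
        by (simp add: suffix_append)
      then show ?thesis
      proof
        assume "suffix u (concat ws)" then show ?thesis using Cons.IH[of u] Cons.prems(2) False by simp
      next
        assume "\<exists>x. u = x @ concat ws \<and> suffix x a"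
        then obtain x where x: "u = x @ concat ws" "suffix x a" by blast
        then have "x \<in> L" using aL assms unfolding suffix_closed_def by blast
        moreover have "concat ws \<in> plus_cl L" using False Cons.prems(2) unfolding plus_in
          by (intro exI[of _ ws]) simp
        ultimately have "x @ concat ws \<in> plus_cl L" using sub_plus plus_app by blast
        then show ?thesis using x by simp
      qed
    qed
  qed
  then show ?thesis unfolding suffix_closed_def
  proof (intro ballI allI impI)
    fix w u assume H: "\<And>ws u. ws \<noteq> [] \<Longrightarrow> set ws \<subseteq> L \<Longrightarrow> suffix u (concat ws) \<Longrightarrow> u \<in> plus_cl L"
      and w: "w \<in> plus_cl L" and u: "suffix u w"
    from w obtain ws where "ws \<noteq> []" "set ws \<subseteq> L" "w = concat ws" unfolding plus_in by blast
    then show "u \<in> plus_cl L" using H u by blast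
  qed
qed

lemma fc_pc: "factor_closed L \<Longrightarrow> prefix_closed L"
  unfolding factor_closed_def prefix_closed_def by (meson prefix_imp_sublist)

lemma sw_fc: "subword_closed L \<Longrightarrow> factor_closed L"
  unfolding factor_closed_def subword_closed_def by (meson sublist_imp_subseq)

lemma fc_plus:
  assumes "factor_closed L"
  shows "factor_closed (plus_cl L)"
proof -
  have pc: "prefix_closed (plus_cl L)" using pc_plus fc_pc assms by blast
  have "\<And>u. ws \<noteq> [] \<Longrightarrow> set ws \<subseteq> L \<Longrightarrow> sublist u (concat ws) \<Longrightarrow> u \<in> plus_cl L" for ws
  proof (induction ws)
    case Nil then show ?case by simp
  next
    case (Cons a ws u)
    have aL: "a \<in> L" using Cons.prems(2) by simp
    show ?case
    proof (cases "ws = []")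
      case True
      then have "sublist u a" using Cons.prems by simp
      then have "u \<in> L" using aL assms unfolding factor_closed_def by blast
      then show ?thesis using sub_plus by blast
    next
      case False
      have cw: "concat ws \<in> plus_cl L" using False Cons.prems unfolding plus_in by auto
      from Cons.prems(3) have "sublist u a \<or> sublist u (concat ws) \<or>
          (\<exists>x1 x2. u = x1 @ x2 \<and> suffix x1 a \<and> prefix x2 (concat ws))"
        by (simp add: sublist_append)
      then show ?thesis
      proof (elim disjE)
        assume "sublist u a"
        then have "u \<in> L" using aL assms unfolding factor_closed_def by blast
        then show ?thesis using sub_plus by blast
      next
        assume "sublist u (concat ws)" then show ?thesis using Cons.IH[of u] Cons.prems(2) False by simp
      next
        assume "\<exists>x1 x2. u = x1 @ x2 \<and> suffix x1 a \<and> prefix x2 (concat ws)"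
        then obtain x1 x2 where x: "u = x1 @ x2" "suffix x1 a" "prefix x2 (concat ws)" by blast
        then have "x1 \<in> L" using aL assms unfolding factor_closed_def
          by (meson suffix_imp_sublist)
        moreover have "x2 \<in> plus_cl L" using pc cw x unfolding prefix_closed_def by blast
        ultimately have "x1 @ x2 \<in> plus_cl L" using sub_plus plus_app by blast
        then show ?thesis using x by simp
      qed
    qed
  qed
  then show ?thesis unfolding factor_closed_def
  proof (intro ballI allI impI)
    fix w u assume H: "\<And>ws u. ws \<noteq> [] \<Longrightarrow> set ws \<subseteq> L \<Longrightarrow> sublist u (concat ws) \<Longrightarrow> u \<in> plus_cl L"
      and w: "w \<in> plus_cl L" and u: "sublist u w"
    from w obtain ws where "ws \<noteq> []" "set ws \<subseteq> L" "w = concat ws" unfolding plus_in by blast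
    then show "u \<in> plus_cl L" using H u by blast
  qed
qed

lemma sw_plus:
  assumes "subword_closed L"
  shows "subword_closed (plus_cl L)"
proof -
  have "\<And>u. ws \<noteq> [] \<Longrightarrow> set ws \<subseteq> L \<Longrightarrow> subseq u (concat ws) \<Longrightarrow> u \<in> plus_cl L" for ws
  proof (induction ws)
    case Nil then show ?case by simp
  next
    case (Cons a ws u)
    have aL: "a \<in> L" using Cons.prems(2) by simp
    show ?case
    proof (cases "ws = []")
      case True
      then have "subseq u a" using Cons.prems by simp
      then have "u \<in> L" using aL assms unfolding subword_closed_def by blast
      then show ?thesis using sub_plus by blast
    next
      case False
      from Cons.prems(3) obtain x1 x2 where x: "u = x1 @ x2" "subseq x1 a" "subseq x2 (concat ws)"
        by (auto elim: subseq_appendE)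
      then have "x1 \<in> L" using aL assms unfolding subword_closed_def by blast
      moreover have "x2 \<in> plus_cl L" using Cons.IH[of x2] Cons.prems(2) False x by simp
      ultimately have "x1 @ x2 \<in> plus_cl L" using sub_plus plus_app by blast
      then show ?thesis using x by simp
    qed
  qed
  then show ?thesis unfolding subword_closed_def
  proof (intro ballI allI impI)
    fix w u assume H: "\<And>ws u. ws \<noteq> [] \<Longrightarrow> set ws \<subseteq> L \<Longrightarrow> subseq u (concat ws) \<Longrightarrow> u \<in> plus_cl L"
      and w: "w \<in> plus_cl L" and u: "subseq u w"
    from w obtain ws where "ws \<noteq> []" "set ws \<subseteq> L" "w = concat ws" unfolding plus_in by blast
    then show "u \<in> plus_cl L" using H u by blast
  qed
qed

theorem mainTheorem9:
  fixes L :: "'a list set"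
  assumes "L \<noteq> UNIV"
    and "prefix_closed L \<or> suffix_closed L \<or> factor_closed L \<or> subword_closed L"
  shows "plus_cl (- L) = - L
     \<and> ((prefix_closed L \<longrightarrow> prefix_closed (plus_cl L))
       \<and> (suffix_closed L \<longrightarrow> suffix_closed (plus_cl L))
       \<and> (factor_closed L \<longrightarrow> factor_closed (plus_cl L))
       \<and> (subword_closed L \<longrightarrow> subword_closed (plus_cl L)))
     \<and> plus_cl (- plus_cl L) = - plus_cl L
     \<and> kc_reach L \<subseteq> {L, - L, plus_cl L, - plus_cl L}"
proof -
  have ps: "prefix_closed L \<or> suffix_closed L" using assms(2) fc_pc sw_fc by blast
  have c1: "plus_cl (- L) = - L" using compl_plus ps by blast
  have ps2: "prefix_closed (plus_cl L) \<or> suffix_closed (plus_cl L)"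
    using ps pc_plus sc_plus by blast
  have c3: "plus_cl (- plus_cl L) = - plus_cl L" using compl_plus ps2 by blast
  have c4: "X \<in> {L, - L, plus_cl L, - plus_cl L}" if "X \<in> kc_reach L" for X
    using that
  proof (induction rule: kc_reach.induct)
    case base then show ?case by simp
  next
    case (plus X) then show ?case
      using c1 c3 plus_idem[of L] by (elim insertE) auto
  next
    case (compl X) then show ?case by (elim insertE) auto
  qed
  have c2: "(prefix_closed L \<longrightarrow> prefix_closed (plus_cl L))
       \<and> (suffix_closed L \<longrightarrow> suffix_closed (plus_cl L))
       \<and> (factor_closed L \<longrightarrow> factor_closed (plus_cl L))
       \<and> (subword_closed L \<longrightarrow> subword_closed (plus_cl L))"
    using pc_plus sc_plus fc_plus sw_plus by blast
  have "kc_reach L \<subseteq> {L, - L, plus_cl L, - plus_cl L}" using c4 by blast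
  then show ?thesis using c1 c2 c3 by simp
qed

end
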